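(* Let $\mathcal{P}_1,\mathcal{P}_2\subseteq\mathbb{R}^n$ be non-empty topologically closed convex polyhedra, where $\mathcal{P}_1=\mathrm{con}(\mathcal{C}_1)=\mathrm{gen}(\mathcal{G}_1)$ for a finite constraint system $\mathcal{C}_1$ and a generator system $\mathcal{G}_1=(R_1,P_1)$. Then $\mathcal{P}_1\uplus\mathcal{P}_2\neq\mathcal{P}_1\cup\mathcal{P}_2$ if and only if there exist a constraint $\beta_1\in\mathcal{C}_1$ and a generator $g_1$ of $\mathcal{G}_1$ (i.e., a ray in $R_1$ or a point in $P_1$) such that (1) $g_1$ saturates $\beta_1$, (2) $\mathcal{P}_2$ violates $\beta_1$, and (3) $\mathcal{P}_2$ does not subsume $g_1$.
   Context: A constraint is a non-strict linear inequality $\langle\mathbf{a},\mathbf{x}\rangle\le b$ with $\mathbf{a}\in\mathbb{R}^n\setminus\{\mathbf{0}\}$, $b\in\mathbb{R}$ (equalities are treated as pairs of inequalities). For a finite set $\mathcal{C}$ of constraints, $\mathrm{con}(\mathcal{C})=\{\mathbf{p}\in\mathbb{R}^n : \langle\mathbf{a},\mathbf{p}\rangle\le b \text{ for all } (\langle\mathbf{a},\mathbf{x}\rangle\le b)\in\mathcal{C}\}$; such sets are the (topologically closed convex) polyhedra. A generator system is a pair $(R,P)$ of finite sets $R=\{\mathbf{r}_1,\dots,\mathbf{r}_r\}$, $P=\{\mathbf{p}_1,\dots,\mathbf{p}_p\}\subseteq\mathbb{R}^n$ with $\mathbf{0}\notin R$, and $\mathrm{gen}((R,P))=\{\sum_i\rho_i\mathbf{r}_i+\sum_i\sigma_i\mathbf{p}_i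 : \rho_i\ge 0,\ \sigma_i\ge0,\ \sum_i\sigma_i=1\}$; elements of $R$ are called rays and elements of $P$ points of the generator system. A vector $\mathbf{r}\neq\mathbf{0}$ is a ray of a non-empty polyhedron $\mathcal{P}$ if $\mathbf{p}+\rho\mathbf{r}\in\mathcal{P}$ for all $\mathbf{p}\in\mathcal{P}$, $\rho\ge0$. A point $\mathbf{p}$ saturates the constraint $\langle\mathbf{a},\mathbf{x}\rangle\le b$ if $\langle\mathbf{a},\mathbf{p}\rangle=b$; a ray $\mathbf{r}$ saturates it if $\langle\mathbf{a},\mathbf{r}\rangle=0$. A polyhedron violates a constraint if some point of it does not satisfy the constraint. A polyhedron $\mathcal{P}$ subsumes a point $\mathbf{p}$ if $\mathbf{p}\in\mathcal{P}$, and subsumes a ray $\mathbf{r}$ if $\mathbf{r}$ is a ray of $\mathcal{P}$. $\mathcal{P}_1\uplus\mathcal{P}_2$ denotes the convex polyhedral hull, i.e., the smallest closed convex polyhedron containing $\mathcal{P}_1\cup\mathcal{P}_2$; if $\mathcal{P}_i=\mathrm{gen}((R_i,P_i))$ then $\mathcal{P}_1\uplus\mathcal{P}_2=\mathrm{gen}((R_1\cup R_2,P_1\cup P_2))$. *)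

theory Defs
  imports "HOL-Analysis.Analysis"
begin

text \<open>A constraint \<open>\<langle>a,x\<rangle> \<le> b\<close> is represented by the pair \<open>(a, b)\<close>, with \<open>a \<noteq> 0\<close>.\<close>

definition valid_constraint :: "(real^'n) \<times> real \<Rightarrow> bool" where
  "valid_constraint c \<longleftrightarrow> fst c \<noteq> 0"

definition con :: "((real^'n) \<times> real) set \<Rightarrow> (real^'n) set" where
  "con C = {p. \<forall>(a, b) \<in> C. a \<bullet> p \<le> b}"

definition valid_gensys :: "(real^'n) set \<Rightarrow> (real^'n) set \<Rightarrow> bool" where
  "valid_gensys R P \<longleftrightarrow> finite R \<and> finite P \<and> 0 \<notin> R"

definition gen :: "(real^'n) set \<times> (real^'n) set \<Rightarrow> (real^'n) set" where
  "gen G = {x. \<exists>\<rho> \<sigma>. (\<forall>r\<in>fst G. \<rho> r \<ge> 0) \<and> (\<forall>p\<in>snd G. \<sigma> p \<ge> 0)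
              \<and> (\<Sum>p\<in>snd G. \<sigma> p) = 1
              \<and> x = (\<Sum>r\<in>fst G. \<rho> r *\<^sub>R r) + (\<Sum>p\<in>snd G. \<sigma> p *\<^sub>R p)}"

definition is_polyhedron :: "(real^'n) set \<Rightarrow> bool" where
  "is_polyhedron Q \<longleftrightarrow> (\<exists>C. finite C \<and> (\<forall>c\<in>C. valid_constraint c) \<and> Q = con C)"

definition is_ray_of :: "(real^'n) set \<Rightarrow> real^'n \<Rightarrow> bool" where
  "is_ray_of Q r \<longleftrightarrow> r \<noteq> 0 \<and> (\<forall>p\<in>Q. \<forall>\<rho>::real. \<rho> \<ge> 0 \<longrightarrow> p + \<rho> *\<^sub>R r \<in> Q)"

definition point_saturates :: "real^'n \<Rightarrow> (real^'n) \<times> real \<Rightarrow> bool" where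
  "point_saturates p c \<longleftrightarrow> fst c \<bullet> p = snd c"

definition ray_saturates :: "real^'n \<Rightarrow> (real^'n) \<times> real \<Rightarrow> bool" where
  "ray_saturates r c \<longleftrightarrow> fst c \<bullet> r = 0"

definition violates :: "(real^'n) set \<Rightarrow> (real^'n) \<times> real \<Rightarrow> bool" where
  "violates Q c \<longleftrightarrow> (\<exists>p\<in>Q. \<not> (fst c \<bullet> p \<le> snd c))"

definition poly_hull :: "(real^'n) set \<Rightarrow> (real^'n) set \<Rightarrow> (real^'n) set" where
  "poly_hull Q1 Q2 = \<Inter> {Q. is_polyhedron Q \<and> Q1 \<union> Q2 \<subseteq> Q}"

end

theory Submission imports Defs begin

lemma con_eq_Inter: "con C = \<Inter> ((\<lambda>(a,b). {x. a \<bullet> x \<le> b}) ` C)"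
  unfolding con_def by auto

lemma is_poly_imp: "is_polyhedron Q \<Longrightarrow> polyhedron Q"
  unfolding is_polyhedron_def
  by (auto simp: con_eq_Inter intro!: polyhedron_Inter polyhedron_halfspace_le)

lemma memI_half: "h = {x. c \<bullet> x \<le> d} \<Longrightarrow> (y \<in> h \<longleftrightarrow> c \<bullet> y \<le> (d::real))"
  by auto

lemma some_ab: "\<exists>a b. a \<noteq> 0 \<and> h = {x. a \<bullet> x \<le> b} \<Longrightarrow> \<exists>ab. fst ab \<noteq> 0 \<and> h = {x. fst ab \<bullet> x \<le> (snd ab::real)}"
  apply (erule exE)+
  apply (rule_tac x="(a,b)" in exI)
  apply simp
  done

lemma poly_imp_is: assumes "polyhedron (Q::(real^'n) set)" shows "is_polyhedron Q"
proof -
  obtain F where F: "finite F" "Q = \<Inter>F" "\<forall>h\<in>F. \<exists>a b. a \<noteq> 0 \<and> h = {x. a \<bullet> x \<le> b}"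
    using assms unfolding polyhedron_def by blast
  define f where "f h = (SOME ab. fst ab \<noteq> 0 \<and> h = {x. fst ab \<bullet> x \<le> snd ab})" for h :: "(real^'n) set"
  have fh: "fst (f h) \<noteq> 0 \<and> h = {x. fst (f h) \<bullet> x \<le> snd (f h)}" if "h \<in> F" for h
  proof -
    have "\<exists>ab. fst ab \<noteq> 0 \<and> h = {x. fst ab \<bullet> x \<le> snd ab}"
      by (rule some_ab[OF bspec[OF F(3) that]])
    then show ?thesis unfolding f_def by (rule someI_ex)
  qed
  have fh1: "fst (f h) \<noteq> 0" if "h \<in> F" for h using fh[OF that] by (rule conjunct1)
  have fhm: "y \<in> h \<longleftrightarrow> fst (f h) \<bullet> y \<le> snd (f h)" if "h \<in> F" for h y
    using fh[OF that, THEN conjunct2] by (rule memI_half)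
  have "Q = con (f ` F)"
    unfolding F(2) con_def
  proof (intro set_eqI iffI)
    fix x assume x: "x \<in> \<Inter>F"
    have hx: "fst (f h) \<bullet> x \<le> snd (f h)" if "h \<in> F" for h
      using fhm[OF that, of x] x that by blast
    show "x \<in> {p. \<forall>(a, b)\<in>f ` F. a \<bullet> p \<le> b}"
    proof (simp only: mem_Collect_eq, intro ballI)
      fix ab assume "ab \<in> f ` F"
      then obtain h where h: "h \<in> F" "ab = f h" by blast
      show "case ab of (a, b) \<Rightarrow> a \<bullet> x \<le> b" unfolding h(2) case_prod_beta by (rule hx[OF h(1)])
    qed
  next
    fix x assume x: "x \<in> {p. \<forall>(a, b)\<in>f ` F. a \<bullet> p \<le> b}"
    show "x \<in> \<Inter>F"
    proof
      fix h assume h: "h \<in> F"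
      have "fst (f h) \<bullet> x \<le> snd (f h)" using x h by (auto simp: case_prod_beta)
      then show "x \<in> h" using fhm[OF h, of x] by blast
    qed
  qed
  moreover have "\<forall>c\<in>f ` F. valid_constraint c"
    unfolding valid_constraint_def using fh1 by blast
  ultimately show ?thesis unfolding is_polyhedron_def
    using F(1) by blast
qed

lemma union_poly:
  fixes Q1 Q2 :: "(real^'n) set"
  assumes "polyhedron Q1" "polyhedron Q2" "convex (Q1 \<union> Q2)"
  shows "polyhedron (Q1 \<union> Q2)"
proof -
  have "{F. F face_of (Q1 \<union> Q2)} \<subseteq> (\<lambda>(A,B). A \<union> B) ` ({A. A face_of Q1} \<times> {B. B face_of Q2})"
  proof
    fix F assume "F \<in> {F. F face_of (Q1 \<union> Q2)}"
    then have F: "F face_of (Q1 \<union> Q2)" by simp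
    have "(F \<inter> Q1) face_of ((Q1 \<union> Q2) \<inter> Q1)"
      by (rule face_of_Int_Int[OF F face_of_refl]) (simp add: assms polyhedron_imp_convex)
    moreover have "(F \<inter> Q2) face_of ((Q1 \<union> Q2) \<inter> Q2)"
      by (rule face_of_Int_Int[OF F face_of_refl]) (simp add: assms polyhedron_imp_convex)
    moreover have "F = (F \<inter> Q1) \<union> (F \<inter> Q2)" using face_of_imp_subset[OF F] by blast
    ultimately show "F \<in> (\<lambda>(A,B). A \<union> B) ` ({A. A face_of Q1} \<times> {B. B face_of Q2})"
      by (auto simp: Int_absorb1 intro!: image_eqI[of _ _ "(F \<inter> Q1, F \<inter> Q2)"])
  qed
  moreover have "finite ({A. A face_of Q1} \<times> {B. B face_of Q2})"
    using finite_polyhedron_faces assms by blast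
  ultimately have "finite {F. F face_of (Q1 \<union> Q2)}" by (meson finite_imageI finite_subset)
  moreover have "closed (Q1 \<union> Q2)"
    using closed_Un polyhedron_imp_closed assms(1,2) by blast
  ultimately show ?thesis
    using assms(3) polyhedron_eq_finite_faces by blast
qed

lemma hull_eq_iff:
  fixes Q1 Q2 :: "(real^'n) set"
  assumes "is_polyhedron Q1" "is_polyhedron Q2"
  shows "poly_hull Q1 Q2 = Q1 \<union> Q2 \<longleftrightarrow> convex (Q1 \<union> Q2)"
proof
  assume h: "poly_hull Q1 Q2 = Q1 \<union> Q2"
  have "convex (poly_hull Q1 Q2)" unfolding poly_hull_def
    by (rule convex_Inter) (auto dest: is_poly_imp polyhedron_imp_convex)
  then show "convex (Q1 \<union> Q2)" using h by simp
next
  assume c: "convex (Q1 \<union> Q2)"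
  have "is_polyhedron (Q1 \<union> Q2)"
    using union_poly[OF is_poly_imp[OF assms(1)] is_poly_imp[OF assms(2)] c] poly_imp_is by blast
  then show "poly_hull Q1 Q2 = Q1 \<union> Q2" unfolding poly_hull_def by blast
qed

lemma lin_bound:
  fixes A B D :: real
  assumes "\<And>\<rho>. \<rho> \<ge> 0 \<Longrightarrow> A + \<rho> * B \<le> D" shows "B \<le> 0"
proof (rule ccontr)
  assume "\<not> B \<le> 0"
  then have B: "B > 0" by simp
  have "A + (\<bar>D\<bar> + \<bar>A\<bar> + 1) \<le> D" using assms[of "(\<bar>D\<bar> + \<bar>A\<bar> + 1) / B"] B by simp
  then show False using abs_ge_self[of D] abs_ge_minus_self[of A] by linarith
qed

lemma lin_lim:
  fixes A B D :: real
  assumes "\<And>t. 0 < t \<Longrightarrow> t \<le> 1 \<Longrightarrow> A + t * B \<le> D" shows "A \<le> D"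
proof (rule ccontr)
  assume n: "\<not> A \<le> D"
  show False
  proof (cases "B \<ge> 0")
    case True
    then show False using assms[of 1] n by simp
  next
    case False
    define t where "t = min 1 ((A - D) / (- 2 * B))"
    have "(A - D) / (- 2 * B) > 0" by (rule divide_pos_pos) (use n False in auto)
    then have t0: "t > 0" by (simp add: t_def)
    have "t \<le> (A - D) / (- 2 * B)" by (simp add: t_def)
    then have "t * (- 2 * B) \<le> (A - D) / (- 2 * B) * (- 2 * B)"
      by (rule mult_right_mono) (use False in simp)
    then have "t * (- 2 * B) \<le> A - D" using False by simp
    then have "- 2 * (t * B) \<le> A - D" by (simp add: algebra_simps)
    then have "A + t * B > D" using n by linarith
    moreover have t1: "t \<le> 1" by (simp add: t_def)
    ultimately show False using assms[OF t0 t1] by linarith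
  qed
qed

lemma in_gen_iff: "x \<in> gen (R, P) \<longleftrightarrow> (\<exists>\<rho> \<sigma>. (\<forall>r\<in>R. \<rho> r \<ge> 0) \<and> (\<forall>p\<in>P. \<sigma> p \<ge> 0)
              \<and> (\<Sum>p\<in>P. \<sigma> p) = 1
              \<and> x = (\<Sum>r\<in>R. \<rho> r *\<^sub>R r) + (\<Sum>p\<in>P. \<sigma> p *\<^sub>R p))"
  by (simp add: gen_def)

lemma sum_delta_scale:
  assumes "finite R" "r \<in> R"
  shows "(\<Sum>s\<in>R. (if s = r then c else 0) *\<^sub>R s) = c *\<^sub>R (r::'a::real_vector)"
proof -
  have "(\<Sum>s\<in>R. (if s = r then c else 0) *\<^sub>R s) = (\<Sum>s\<in>R. if s = r then c *\<^sub>R r else 0)"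
    by (rule sum.cong) auto
  also have "\<dots> = c *\<^sub>R r" using assms by (simp add: sum.delta)
  finally show ?thesis .
qed

lemma gen_ray_point:
  assumes "finite R" "finite P" "p0 \<in> P" "r \<in> R" "\<rho> \<ge> 0"
  shows "p0 + \<rho> *\<^sub>R r \<in> gen (R, P)"
  unfolding in_gen_iff
  apply (rule exI[of _ "\<lambda>s. if s = r then \<rho> else 0"])
  apply (rule exI[of _ "\<lambda>s. if s = p0 then 1 else 0"])
  using assms by (simp add: sum_delta_scale)

lemma point_in_gen:
  assumes "finite R" "finite P" "p0 \<in> P"
  shows "p0 \<in> gen (R, P)"
  unfolding in_gen_iff
  apply (rule exI[of _ "\<lambda>s. 0"])
  apply (rule exI[of _ "\<lambda>s. if s = p0 then 1 else 0"])
  using assms by (simp add: sum_delta_scale)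

lemma con_mem: "x \<in> con C \<longleftrightarrow> (\<forall>(a,b)\<in>C. a \<bullet> x \<le> b)"
  by (simp add: con_def)

lemma ray_le:
  assumes "con C = gen (R, P)" "finite R" "finite P" "p0 \<in> P" "r \<in> R" "(a,b) \<in> C"
  shows "a \<bullet> r \<le> 0"
proof (rule lin_bound)
  fix \<rho> :: real assume "\<rho> \<ge> 0"
  then have "p0 + \<rho> *\<^sub>R r \<in> con C" using gen_ray_point[OF assms(2-5)] assms(1) by simp
  then have "a \<bullet> (p0 + \<rho> *\<^sub>R r) \<le> b" using assms(6) by (auto simp: con_mem)
  then show "a \<bullet> p0 + \<rho> * (a \<bullet> r) \<le> b" by (simp add: inner_add_right)
qed

lemma con_le: "x \<in> con C \<Longrightarrow> (a,b) \<in> C \<Longrightarrow> a \<bullet> x \<le> b"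
  by (auto simp: con_mem)

lemma con_convex: "convex (con C)"
  unfolding con_eq_Inter
  by (rule convex_Inter) (auto intro: convex_halfspace_le)

lemma ray_of_le:
  assumes "is_ray_of (con C) r" "con C \<noteq> {}" "(c,e) \<in> C"
  shows "c \<bullet> r \<le> 0"
proof -
  obtain q where q: "q \<in> con C" using assms(2) by blast
  show ?thesis
  proof (rule lin_bound)
    fix \<rho> :: real assume "\<rho> \<ge> 0"
    then have "q + \<rho> *\<^sub>R r \<in> con C" using assms(1) q unfolding is_ray_of_def by blast
    then have "c \<bullet> (q + \<rho> *\<^sub>R r) \<le> e" using assms(3) by (auto simp: con_mem)
    then show "c \<bullet> q + \<rho> * (c \<bullet> r) \<le> e" by (simp add: inner_add_right)
  qed
qed

lemma aux_half: "(D::real) \<noteq> 0 \<Longrightarrow> (N / (2 * D)) * D = N / 2"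
  by (simp add: field_simps)

lemma dirA_point:
  fixes C1 C2 :: "((real^'n) \<times> real) set"
  assumes cv: "convex (con C1 \<union> con C2)"
    and ab: "(a,b) \<in> C1" and q: "q \<in> con C2" "a \<bullet> q > b"
    and p: "p \<in> con C1" "a \<bullet> p = b"
  shows "p \<in> con C2"
  unfolding con_mem
proof (clarify)
  fix c e assume ce: "(c, e) \<in> C2"
  show "c \<bullet> p \<le> e"
  proof (rule lin_lim[of _ "c \<bullet> (q - p)"])
    fix t :: real assume t: "0 < t" "t \<le> 1"
    define w where "w = (1 - t) *\<^sub>R p + t *\<^sub>R q"
    have wU: "w \<in> con C1 \<union> con C2" unfolding w_def
      by (rule convex_alt[THEN iffD1, OF cv, rule_format]) (use p q t in auto)
    have "a \<bullet> w = b + t * (a \<bullet> q - b)" using p(2)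
      by (simp add: w_def inner_add_right algebra_simps)
    also have "\<dots> > b" using t q by simp
    finally have wb: "b < a \<bullet> w" .
      have "w \<notin> con C1"
      proof
        assume "w \<in> con C1"
        then have "a \<bullet> w \<le> b" by (rule con_le[OF _ ab])
        then show False using wb by simp
      qed
    then have "w \<in> con C2" using wU by blast
    then have "c \<bullet> w \<le> e" using ce by (auto simp: con_mem)
    moreover have "c \<bullet> w = c \<bullet> p + t * (c \<bullet> (q - p))"
      by (simp add: w_def inner_add_right inner_diff_right algebra_simps)
    ultimately show "c \<bullet> p + t * (c \<bullet> (q - p)) \<le> e" by simp
  qed
qed

lemma dirA_ray:
  fixes C1 C2 :: "((real^'n) \<times> real) set"
  assumes cv: "convex (con C1 \<union> con C2)"
    and ab: "(a,b) \<in> C1" and q: "q \<in> con C2" "a \<bullet> q > b"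
    and p0: "p0 \<in> con C1"
    and rr: "\<And>\<rho>. \<rho> \<ge> 0 \<Longrightarrow> p0 + \<rho> *\<^sub>R r \<in> con C1"
    and ar: "a \<bullet> r = 0" and r0: "r \<noteq> 0"
  shows "is_ray_of (con C2) r"
proof -
  have cr: "c \<bullet> r \<le> 0" if ce: "(c, e) \<in> C2" for c e
  proof -
    have ap0: "a \<bullet> p0 \<le> b" using p0 ab by (auto simp: con_mem)
    define lam where "lam = (a \<bullet> q - b) / (2 * (a \<bullet> q - a \<bullet> p0))"
    have den: "a \<bullet> q - a \<bullet> p0 > 0" using ap0 q by simp
    have lam0: "lam > 0" unfolding lam_def using q den by (simp add: divide_pos_pos)
    have lamprod: "lam * (a \<bullet> q - a \<bullet> p0) = (a \<bullet> q - b) / 2"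
      unfolding lam_def by (rule aux_half) (use den in simp)
    have "lam * (a \<bullet> q - a \<bullet> p0) \<le> (a \<bullet> q - a \<bullet> p0)" unfolding lamprod using ap0 q by (simp add: field_simps)
    then have "lam * (a \<bullet> q - a \<bullet> p0) \<le> 1 * (a \<bullet> q - a \<bullet> p0)" by simp
    then have lam1: "lam \<le> 1" using den by (rule mult_right_le_imp_le)
    have "lam * (c \<bullet> r) \<le> 0"
    proof (rule lin_bound[of "(1 - lam) * (c \<bullet> q) + lam * (c \<bullet> p0)" _ e])
      fix \<rho> :: real assume \<rho>: "\<rho> \<ge> 0"
      define w where "w = (1 - lam) *\<^sub>R q + lam *\<^sub>R (p0 + \<rho> *\<^sub>R r)"
      have wU: "w \<in> con C1 \<union> con C2"
        unfolding w_def
        by (rule convex_alt[THEN iffD1, OF cv, rule_format]) (use rr[OF \<rho>] q lam0 lam1 in auto)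
      have "a \<bullet> w = (1 - lam) * (a \<bullet> q) + lam * (a \<bullet> p0)" using ar
        by (simp add: w_def inner_add_right algebra_simps)
      also have "\<dots> = a \<bullet> q - lam * (a \<bullet> q - a \<bullet> p0)" by (simp add: algebra_simps)
      also have "\<dots> > b" using lamprod q by simp
      finally have wb: "b < a \<bullet> w" .
      have "w \<notin> con C1"
      proof
        assume "w \<in> con C1"
        then have "a \<bullet> w \<le> b" by (rule con_le[OF _ ab])
        then show False using wb by simp
      qed
      then have "w \<in> con C2" using wU by blast
      then have "c \<bullet> w \<le> e" using ce by (auto simp: con_mem)
      moreover have "c \<bullet> w = (1 - lam) * (c \<bullet> q) + lam * (c \<bullet> p0) + \<rho> * (lam * (c \<bullet> r))"
        by (simp add: w_def inner_add_right algebra_simps)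
      ultimately show "(1 - lam) * (c \<bullet> q) + lam * (c \<bullet> p0) + \<rho> * (lam * (c \<bullet> r)) \<le> e" by simp
    qed
    then show ?thesis using lam0 by (simp add: mult_le_0_iff)
  qed
  show ?thesis unfolding is_ray_of_def
  proof (intro conjI r0 ballI allI impI)
    fix p \<rho> assume p: "p \<in> con C2" and \<rho>: "(0::real) \<le> \<rho>"
    show "p + \<rho> *\<^sub>R r \<in> con C2" unfolding con_mem
    proof clarify
      fix c e assume ce: "(c, e) \<in> C2"
      have "c \<bullet> p \<le> e" using p ce by (auto simp: con_mem)
      moreover have "\<rho> * (c \<bullet> r) \<le> 0" using cr[OF ce] \<rho> by (simp add: mult_nonneg_nonpos)
      ultimately show "c \<bullet> (p + \<rho> *\<^sub>R r) \<le> e" by (simp add: inner_add_right)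
    qed
  qed
qed

lemma dirB:
  fixes C1 C2 :: "((real^'n) \<times> real) set"
  assumes fC1: "finite C1" and fR: "finite R1" and fP: "finite P1"
    and eq: "con C1 = gen (R1, P1)" and p0: "p0 \<in> P1" and ne2: "con C2 \<noteq> {}"
    and H: "\<And>\<beta> r. \<beta> \<in> C1 \<Longrightarrow> r \<in> R1 \<Longrightarrow> ray_saturates r \<beta> \<Longrightarrow> violates (con C2) \<beta> \<Longrightarrow> is_ray_of (con C2) r"
    and H': "\<And>\<beta> p. \<beta> \<in> C1 \<Longrightarrow> p \<in> P1 \<Longrightarrow> point_saturates p \<beta> \<Longrightarrow> violates (con C2) \<beta> \<Longrightarrow> p \<in> con C2"
    and x: "x \<in> con C1" and y: "y \<in> con C2" and t: "0 \<le> t" "t \<le> 1"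
  shows "(1 - t) *\<^sub>R x + t *\<^sub>R y \<in> con C1 \<union> con C2"
proof -
  define d where "d = y - x"
  have zt: "(1 - t) *\<^sub>R x + t *\<^sub>R y = x + t *\<^sub>R d" by (simp add: d_def algebra_simps)
  show ?thesis
  proof (cases "x + t *\<^sub>R d \<in> con C1")
    case True then show ?thesis using zt by simp
  next
    case False
    then obtain a0 b0 where ab0: "(a0, b0) \<in> C1" "\<not> a0 \<bullet> (x + t *\<^sub>R d) \<le> b0"
      by (auto simp: con_mem)
    have xa0: "a0 \<bullet> x \<le> b0" using con_le[OF x ab0(1)] .
    have ab0': "a0 \<bullet> x + t * (a0 \<bullet> d) > b0" using ab0(2) by (simp add: inner_add_right)
    then have "t * (a0 \<bullet> d) > 0" using xa0 by linarith
    then have a0d: "a0 \<bullet> d > 0" using t by (simp add: zero_less_mult_iff)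
    define S where "S = {ab \<in> C1. fst ab \<bullet> d > 0}"
    define \<tau> where "\<tau> ab = (snd ab - fst ab \<bullet> x) / (fst ab \<bullet> d)" for ab
    have S0: "(a0, b0) \<in> S" using ab0(1) a0d by (simp add: S_def)
    have fS: "finite S" using fC1 by (simp add: S_def)
    have "Min (\<tau> ` S) \<in> \<tau> ` S" by (rule Min_in) (use fS S0 in auto)
    then obtain \<beta> where \<beta>S: "\<beta> \<in> S" and \<beta>min: "\<tau> \<beta> = Min (\<tau> ` S)" by auto
    have \<beta>le: "\<tau> \<beta> \<le> \<tau> \<beta>'" if "\<beta>' \<in> S" for \<beta>'
      unfolding \<beta>min by (rule Min_le) (use fS that in auto)
    obtain a b where \<beta>: "\<beta> = (a, b)" by fastforce
    have abC: "(a, b) \<in> C1" and ad: "a \<bullet> d > 0" using \<beta>S by (auto simp: S_def \<beta>)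
    define ts where "ts = \<tau> \<beta>"
    have ts_eq: "ts = (b - a \<bullet> x) / (a \<bullet> d)" by (simp add: ts_def \<tau>_def \<beta>)
    have xa: "a \<bullet> x \<le> b" using con_le[OF x abC] .
    have ts0: "ts \<ge> 0" unfolding ts_eq using xa ad by (simp add: divide_nonneg_pos)
    have "ts \<le> \<tau> (a0, b0)" using \<beta>le[OF S0] by (simp add: ts_def)
    also have "\<tau> (a0, b0) < t"
    proof -
      have h: "b0 - a0 \<bullet> x < t * (a0 \<bullet> d)" using ab0' by simp
      have "(b0 - a0 \<bullet> x) / (a0 \<bullet> d) < t" using pos_divide_less_eq[OF a0d] h by blast
      then show ?thesis by (simp add: \<tau>_def)
    qed
    finally have tst: "ts < t" .
    define zs where "zs = x + ts *\<^sub>R d"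
    have azs: "a \<bullet> zs = b" unfolding zs_def ts_eq using ad by (simp add: inner_add_right)
    have zsC1: "zs \<in> con C1" unfolding con_mem
    proof clarify
      fix a' b' assume ab': "(a', b') \<in> C1"
      have xa': "a' \<bullet> x \<le> b'" using con_le[OF x ab'] .
      show "a' \<bullet> zs \<le> b'"
      proof (cases "a' \<bullet> d > 0")
        case False
        then have "ts * (a' \<bullet> d) \<le> 0" using ts0 by (simp add: mult_nonneg_nonpos)
        then show ?thesis using xa' by (simp add: zs_def inner_add_right)
      next
        case True
        then have "(a', b') \<in> S" using ab' by (simp add: S_def)
        then have "ts \<le> (b' - a' \<bullet> x) / (a' \<bullet> d)" using \<beta>le[of "(a', b')"] by (simp add: ts_def \<tau>_def)
        then have "ts * (a' \<bullet> d) \<le> b' - a' \<bullet> x" using pos_le_divide_eq[OF True] by blast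
        then show ?thesis by (simp add: zs_def inner_add_right)
      qed
    qed
    have "ts * (a \<bullet> d) < 1 * (a \<bullet> d)" by (rule mult_strict_right_mono) (use tst t ad in auto)
    moreover have "a \<bullet> y = a \<bullet> x + a \<bullet> d" by (simp add: d_def inner_diff_right)
    moreover have "b = a \<bullet> x + ts * (a \<bullet> d)" using azs by (simp add: zs_def inner_add_right)
    ultimately have ay: "a \<bullet> y > b" by linarith
    have viol: "violates (con C2) (a, b)" unfolding violates_def using y ay by (intro bexI[of _ y]) auto
    obtain \<rho> \<sigma> where \<rho>: "\<forall>r\<in>R1. \<rho> r \<ge> 0" and \<sigma>: "\<forall>p\<in>P1. \<sigma> p \<ge> 0"
      and \<sigma>1: "(\<Sum>p\<in>P1. \<sigma> p) = 1"
      and zsg: "zs = (\<Sum>r\<in>R1. \<rho> r *\<^sub>R r) + (\<Sum>p\<in>P1. \<sigma> p *\<^sub>R p)"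
    proof -
      have "zs \<in> gen (R1, P1)" using zsC1 eq by simp
      then show ?thesis unfolding in_gen_iff by (elim exE conjE) (rule that; assumption)
    qed
    have inner_zs: "c \<bullet> zs = (\<Sum>r\<in>R1. \<rho> r * (c \<bullet> r)) + (\<Sum>p\<in>P1. \<sigma> p * (c \<bullet> p))" for c
      by (simp add: zsg inner_add_right inner_sum_right)
    have ar: "a \<bullet> r \<le> 0" if "r \<in> R1" for r
      using ray_le[OF eq fR fP p0 that abC] .
    have ap: "a \<bullet> p \<le> b" if "p \<in> P1" for p
      using con_le[OF _ abC, of p] eq point_in_gen[OF fR fP that] by simp
    define f1 where "f1 r = - (\<rho> r * (a \<bullet> r))" for r
    define f2 where "f2 p = \<sigma> p * b - \<sigma> p * (a \<bullet> p)" for p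
    have f1n: "\<forall>r\<in>R1. f1 r \<ge> 0" using \<rho> ar by (simp add: f1_def mult_nonneg_nonpos)
    have f2n: "\<forall>p\<in>P1. f2 p \<ge> 0" using \<sigma> ap by (simp add: f2_def mult_left_mono)
    have "(\<Sum>p\<in>P1. \<sigma> p * b) = b" using \<sigma>1 by (simp only: sum_distrib_right[symmetric])
    moreover have "sum f1 R1 = - (\<Sum>r\<in>R1. \<rho> r * (a \<bullet> r))"
      unfolding f1_def by (rule sum_negf)
    moreover have "sum f2 P1 = (\<Sum>p\<in>P1. \<sigma> p * b) - (\<Sum>p\<in>P1. \<sigma> p * (a \<bullet> p))"
      unfolding f2_def by (rule sum_subtractf)
    moreover note inner_zs[of a]
    ultimately have tot: "sum f1 R1 + sum f2 P1 = 0" using azs by linarith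
    have s1: "sum f1 R1 \<ge> 0" using f1n by (simp add: sum_nonneg)
    have s2: "sum f2 P1 \<ge> 0" using f2n by (simp add: sum_nonneg)
    have "sum f1 R1 = 0" using tot s1 s2 by linarith
    then have f10: "\<forall>r\<in>R1. f1 r = 0" using sum_nonneg_eq_0_iff[OF fR] f1n by blast
    have "sum f2 P1 = 0" using tot s1 s2 by linarith
    then have f20: "\<forall>p\<in>P1. f2 p = 0" using sum_nonneg_eq_0_iff[OF fP] f2n by blast
    have zsC2: "zs \<in> con C2" unfolding con_mem
    proof clarify
      fix c e assume ce: "(c, e) \<in> C2"
      have t1: "\<rho> r * (c \<bullet> r) \<le> 0" if r: "r \<in> R1" for r
      proof (cases "\<rho> r = 0")
        case False
        have "f1 r = 0" using f10 r by blast
        then have "a \<bullet> r = 0" using False by (simp add: f1_def)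
        then have "is_ray_of (con C2) r" using H[OF abC r _ viol] by (simp add: ray_saturates_def)
        then have "c \<bullet> r \<le> 0" using ray_of_le[OF _ ne2 ce] by blast
        then show ?thesis using \<rho> r by (simp add: mult_nonneg_nonpos)
      qed simp
      have t2: "\<sigma> p * (c \<bullet> p) \<le> \<sigma> p * e" if p: "p \<in> P1" for p
      proof (cases "\<sigma> p = 0")
        case False
        have "f2 p = 0" using f20 p by blast
        then have "\<sigma> p * (b - a \<bullet> p) = 0" by (simp add: f2_def right_diff_distrib)
        then have "a \<bullet> p = b" using False by simp
        then have "p \<in> con C2" using H'[OF abC p _ viol] by (simp add: point_saturates_def)
        then have "c \<bullet> p \<le> e" using con_le[OF _ ce] by blast
        then show ?thesis using \<sigma> p by (simp add: mult_left_mono)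
      qed simp
      have "c \<bullet> zs \<le> (\<Sum>r\<in>R1. 0) + (\<Sum>p\<in>P1. \<sigma> p * e)"
        unfolding inner_zs by (intro add_mono sum_mono t1 t2)
      also have "\<dots> = e" using \<sigma>1 by (simp only: sum_distrib_right[symmetric]) simp
      finally show "c \<bullet> zs \<le> e" .
    qed
    define lam where "lam = (t - ts) / (1 - ts)"
    have ts1: "ts < 1" using tst t by simp
    have lam0: "0 \<le> lam" "lam \<le> 1" using tst ts1 t
      by (simp_all add: lam_def divide_nonneg_pos pos_divide_le_eq[of "1 - ts"])
    have "lam * (1 - ts) = t - ts" unfolding lam_def using ts1 by simp
    moreover have "(1 - lam) * ts + lam = ts + lam * (1 - ts)" by (simp add: algebra_simps)
    ultimately have lamts: "(1 - lam) * ts + lam = t" by linarith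
    have yd: "y = x + d" by (simp add: d_def)
    have "(1 - lam) *\<^sub>R zs + lam *\<^sub>R y = x + ((1 - lam) * ts + lam) *\<^sub>R d"
      unfolding zs_def yd by (simp add: algebra_simps)
    also have "\<dots> = x + t *\<^sub>R d" using lamts by simp
    finally have e1: "x + t *\<^sub>R d = (1 - lam) *\<^sub>R zs + lam *\<^sub>R y" by simp
    have e2: "(1 - lam) *\<^sub>R zs + lam *\<^sub>R y \<in> con C2"
      by (rule convex_alt[THEN iffD1, OF con_convex, rule_format]) (use zsC2 y lam0 in auto)
    have "(1 - t) *\<^sub>R x + t *\<^sub>R y \<in> con C2" unfolding zt e1 by (rule e2)
    then show ?thesis by blast
  qed
qed

theorem theorem3:
  fixes C1 :: "((real^'n) \<times> real) set"
    and R1 P1 :: "(real^'n) set"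
    and Q1 Q2 :: "(real^'n) set"
  assumes "finite C1" and "\<forall>c\<in>C1. valid_constraint c"
    and "valid_gensys R1 P1"
    and "Q1 = con C1" and "Q1 = gen (R1, P1)"
    and "Q1 \<noteq> {}"
    and "is_polyhedron Q2" and "Q2 \<noteq> {}"
  shows "poly_hull Q1 Q2 \<noteq> Q1 \<union> Q2 \<longleftrightarrow>
    (\<exists>\<beta>\<in>C1.
        (\<exists>r\<in>R1. ray_saturates r \<beta> \<and> violates Q2 \<beta> \<and> \<not> is_ray_of Q2 r)
      \<or> (\<exists>p\<in>P1. point_saturates p \<beta> \<and> violates Q2 \<beta> \<and> p \<notin> Q2))"
proof -
  obtain C2 where fC2: "finite C2" and Q2: "Q2 = con C2"
    using assms(7) unfolding is_polyhedron_def by blast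
  have P1: "is_polyhedron Q1" using assms(1,2,4) unfolding is_polyhedron_def by blast
  have fR: "finite R1" and fP: "finite P1" and R0: "0 \<notin> R1"
    using assms(3) by (auto simp: valid_gensys_def)
  have eq: "con C1 = gen (R1, P1)" using assms(4,5) by simp
  obtain z where z: "z \<in> gen (R1, P1)" using assms(5,6) by blast
  have "P1 \<noteq> {}"
  proof
    assume "P1 = {}"
    then show False using z unfolding in_gen_iff by simp
  qed
  then obtain p0 where p0: "p0 \<in> P1" by blast
  have p0C: "p0 \<in> con C1" using eq point_in_gen[OF fR fP p0] by simp
  have ne2: "con C2 \<noteq> {}" using assms(8) Q2 by simp
  have "poly_hull Q1 Q2 \<noteq> Q1 \<union> Q2 \<longleftrightarrow> \<not> convex (con C1 \<union> con C2)"
    using hull_eq_iff[OF P1 assms(7)] assms(4) Q2 by simp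
  also have "\<dots> \<longleftrightarrow> (\<exists>\<beta>\<in>C1.
        (\<exists>r\<in>R1. ray_saturates r \<beta> \<and> violates (con C2) \<beta> \<and> \<not> is_ray_of (con C2) r)
      \<or> (\<exists>p\<in>P1. point_saturates p \<beta> \<and> violates (con C2) \<beta> \<and> p \<notin> con C2))"
    (is "_ \<longleftrightarrow> ?E")
  proof
    assume nc: "\<not> convex (con C1 \<union> con C2)"
    show ?E
    proof (rule ccontr)
      assume nE: "\<not> ?E"
      have H: "is_ray_of (con C2) r" if "\<beta> \<in> C1" "r \<in> R1" "ray_saturates r \<beta>" "violates (con C2) \<beta>" for \<beta> r
        using nE that by blast
      have H': "p \<in> con C2" if "\<beta> \<in> C1" "p \<in> P1" "point_saturates p \<beta>" "violates (con C2) \<beta>" for \<beta> p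
        using nE that by blast
      have B: "(1 - u') *\<^sub>R x' + u' *\<^sub>R y' \<in> con C1 \<union> con C2"
        if "x' \<in> con C1" "y' \<in> con C2" "0 \<le> u'" "u' \<le> 1" for x' y' and u' :: real
        by (rule dirB[OF assms(1) fR fP eq p0 ne2]) (use H H' that in blast)+
      have "convex (con C1 \<union> con C2)" unfolding convex_alt
      proof (intro ballI allI impI)
        fix x y and u :: real assume x: "x \<in> con C1 \<union> con C2" and y: "y \<in> con C1 \<union> con C2"
          and u: "0 \<le> u \<and> u \<le> 1"
        show "(1 - u) *\<^sub>R x + u *\<^sub>R y \<in> con C1 \<union> con C2"
        proof (cases "x \<in> con C1")
          case xC: True
          show ?thesis
          proof (cases "y \<in> con C1")
            case True
            then show ?thesis
              by (intro UnI1 convex_alt[THEN iffD1, OF con_convex, rule_format]) (use xC u in auto)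
          next
            case False
            then have "y \<in> con C2" using y by blast
            then show ?thesis using B[OF xC] u by blast
          qed
        next
          case False
          then have xC: "x \<in> con C2" using x by blast
          show ?thesis
          proof (cases "y \<in> con C1")
            case True
            have "(1 - (1 - u)) *\<^sub>R y + (1 - u) *\<^sub>R x \<in> con C1 \<union> con C2"
              using B[OF True xC, of "1 - u"] u by simp
            then show ?thesis by (simp add: add.commute)
          next
            case False
            then have "y \<in> con C2" using y by blast
            then show ?thesis
              by (intro UnI2 convex_alt[THEN iffD1, OF con_convex, rule_format]) (use xC u in auto)
          qed
        qed
      qed
      then show False using nc by simp
    qed
  next
    assume E: ?E
    show "\<not> convex (con C1 \<union> con C2)"
    proof
      assume cv: "convex (con C1 \<union> con C2)"
      from E obtain a b where ab: "(a, b) \<in> C1" and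
        cases: "(\<exists>r\<in>R1. ray_saturates r (a,b) \<and> violates (con C2) (a,b) \<and> \<not> is_ray_of (con C2) r)
      \<or> (\<exists>p\<in>P1. point_saturates p (a,b) \<and> violates (con C2) (a,b) \<and> p \<notin> con C2)"
        by fast
      from cases show False
      proof
        assume "\<exists>r\<in>R1. ray_saturates r (a,b) \<and> violates (con C2) (a,b) \<and> \<not> is_ray_of (con C2) r"
        then obtain r q where r: "r \<in> R1" "a \<bullet> r = 0" "\<not> is_ray_of (con C2) r"
          and q: "q \<in> con C2" "\<not> a \<bullet> q \<le> b"
          by (auto simp: ray_saturates_def violates_def)
        have rr: "p0 + \<rho> *\<^sub>R r \<in> con C1" if "\<rho> \<ge> 0" for \<rho>
          using gen_ray_point[OF fR fP p0 r(1) that] eq by simp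
        have "r \<noteq> 0" using R0 r by auto
        have "is_ray_of (con C2) r"
          by (rule dirA_ray[OF cv ab q(1) _ p0C rr r(2) \<open>r \<noteq> 0\<close>]) (use q in auto)
        then show False using r by simp
      next
        assume "\<exists>p\<in>P1. point_saturates p (a,b) \<and> violates (con C2) (a,b) \<and> p \<notin> con C2"
        then obtain p q where p: "p \<in> P1" "a \<bullet> p = b" "p \<notin> con C2"
          and q: "q \<in> con C2" "\<not> a \<bullet> q \<le> b"
          by (auto simp: point_saturates_def violates_def)
        have pC: "p \<in> con C1" using eq point_in_gen[OF fR fP p(1)] by simp
        have "p \<in> con C2"
          by (rule dirA_point[OF cv ab q(1) _ pC p(2)]) (use q in auto)
        then show False using p by simp
      qed
    qed
  qed
  finally show ?thesis using assms(4) Q2 by simp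
qed

end
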